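(* Let $X_n$ be the value $m$ of an index occurrence $\underline m$ chosen uniformly at random among all index occurrences of a uniformly random plain $\lambda$-term of size $n$ (equivalently, the distribution with $\mathbb P(X_n=m)$ equal to the total number of occurrences of $\underline m$ over all plain terms of size $n$ divided by the total number of index occurrences over all plain terms of size $n$). Then for every $m\ge 0$, $\mathbb P(X_n=m)\to(1-\rho)\rho^m$ as $n\to\infty$, i.e. $X_n$ converges to a geometric law with parameter $\rho$.
   Context: Plain $\lambda$-terms in de Bruijn notation are generated by $T::=\underline{n}\mid \lambda T\mid (T\,T)$, with index $\underline n$ encoded as $\mathsf S^n\mathsf 0$. Size: $|\mathsf 0|=1$, $|\mathsf S\,\underline n|=|\underline n|+1$, $|M\,N|=|M|+|N|+1$, $|\lambda M|=|M|+1$. $\rho\approx 0.29559774$ is the positive real root of $z^3+z^2+3z-1$. *)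

theory Defs
  imports Complex_Main
begin

text \<open>Plain lambda-terms in de Bruijn notation: index \<open>Idx n\<close> stands for S^n 0.\<close>
datatype lterm = Idx nat | Lam lterm | App lterm lterm

fun lsize :: "lterm \<Rightarrow> nat" where
  "lsize (Idx n) = n + 1"
| "lsize (Lam M) = lsize M + 1"
| "lsize (App M N) = lsize M + lsize N + 1"

fun occ :: "nat \<Rightarrow> lterm \<Rightarrow> nat" where
  "occ m (Idx n) = (if n = m then 1 else 0)"
| "occ m (Lam M) = occ m M"
| "occ m (App M N) = occ m M + occ m N"

fun nidx :: "lterm \<Rightarrow> nat" where
  "nidx (Idx n) = 1"
| "nidx (Lam M) = nidx M"
| "nidx (App M N) = nidx M + nidx N"

definition probX :: "nat \<Rightarrow> nat \<Rightarrow> real" where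
  "probX n m = real (\<Sum>t\<in>{t. lsize t = n}. occ m t) / real (\<Sum>t\<in>{t. lsize t = n}. nidx t)"

definition rho :: real where
  "rho = (THE z. z > 0 \<and> z ^ 3 + z ^ 2 + 3 * z - 1 = 0)"

end

theory Submission
  imports Defs "HOL-Computational_Algebra.Formal_Power_Series" "HOL-Analysis.Uniform_Limit"
begin

unbundle no vec_syntax
notation fps_nth (infixl \<open>$\<close> 75)


definition szs :: "nat \<Rightarrow> lterm set" where "szs n = {t. lsize t = n}"

lemma lsize_pos: "lsize t > 0" by (induction t) auto

lemma szs0: "szs 0 = {}" using lsize_pos by (auto simp: szs_def)

lemma szs_Suc: "szs (Suc n) = insert (Idx n) (Lam ` szs n \<union>
   (\<Union>i\<le>n. (\<lambda>(a,b). App a b) ` (szs i \<times> szs (n - i))))"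
proof (rule set_eqI)
  fix t show "t \<in> szs (Suc n) \<longleftrightarrow> t \<in> insert (Idx n) (Lam ` szs n \<union>
   (\<Union>i\<le>n. (\<lambda>(a,b). App a b) ` (szs i \<times> szs (n - i))))"
  proof (cases t)
    case (App a b) then show ?thesis by (force simp: szs_def)
  qed (auto simp: szs_def)
qed

lemma finite_szs: "finite (szs n)"
proof (induction n rule: less_induct)
  case (less n)
  show ?case
  proof (cases n)
    case 0 then show ?thesis by (simp add: szs0)
  next
    case (Suc k)
    have "\<And>i. i \<le> k \<Longrightarrow> finite (szs i \<times> szs (k - i))"
      using less Suc by auto
    then show ?thesis using less Suc by (simp add: szs_Suc)
  qed
qed

lemma sum_szs_Suc:
  fixes f :: "lterm \<Rightarrow> 'a::comm_monoid_add"
  shows "sum f (szs (Suc n)) = f (Idx n) + sum (\<lambda>t. f (Lam t)) (szs n) +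
     (\<Sum>i\<le>n. \<Sum>a\<in>szs i. \<Sum>b\<in>szs (n - i). f (App a b))"
proof -
  let ?U = "(\<Union>i\<le>n. (\<lambda>(a,b). App a b) ` (szs i \<times> szs (n - i)))"
  have fin: "finite (szs i)" for i by (rule finite_szs)
  have finU: "finite ?U" using fin by auto
  have d1: "Idx n \<notin> Lam ` szs n \<union> ?U" by auto
  have d2: "Lam ` szs n \<inter> ?U = {}" by auto
  have injApp: "inj_on (\<lambda>(a,b). App a b) A" for A by (auto simp: inj_on_def)
  have "sum f ?U = (\<Sum>i\<le>n. sum f ((\<lambda>(a,b). App a b) ` (szs i \<times> szs (n - i))))"
  proof (rule sum.UNION_disjoint)
    show "\<forall>i\<in>{..n}. finite ((\<lambda>(a,b). App a b) ` (szs i \<times> szs (n - i)))" using fin by auto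
    show "\<forall>i\<in>{..n}. \<forall>j\<in>{..n}. i \<noteq> j \<longrightarrow> (\<lambda>(a,b). App a b) ` (szs i \<times> szs (n - i)) \<inter>
        (\<lambda>(a,b). App a b) ` (szs j \<times> szs (n - j)) = {}"
      by (auto simp: szs_def)
  qed simp
  also have "\<dots> = (\<Sum>i\<le>n. \<Sum>a\<in>szs i. \<Sum>b\<in>szs (n - i). f (App a b))"
    apply (rule sum.cong[OF refl])
    apply (subst sum.reindex[OF injApp])
    apply (simp add: sum.cartesian_product case_prod_beta)
    done
  finally have U: "sum f ?U = (\<Sum>i\<le>n. \<Sum>a\<in>szs i. \<Sum>b\<in>szs (n - i). f (App a b))" .
  have "sum f (szs (Suc n)) = f (Idx n) + sum f (Lam ` szs n \<union> ?U)"
    unfolding szs_Suc using d1 fin finU by (simp add: sum.insert)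
  also have "\<dots> = f (Idx n) + (sum f (Lam ` szs n) + sum f ?U)"
    using d2 fin finU by (simp add: sum.union_disjoint)
  also have "sum f (Lam ` szs n) = sum (\<lambda>t. f (Lam t)) (szs n)"
    by (simp add: sum.reindex inj_on_def)
  finally show ?thesis using U by (simp add: add.assoc)
qed

definition Tf :: "real fps" where "Tf = Abs_fps (\<lambda>n. real (card (szs n)))"
definition Of :: "nat \<Rightarrow> real fps" where "Of m = Abs_fps (\<lambda>n. real (\<Sum>t\<in>szs n. occ m t))"
definition Nf :: "real fps" where "Nf = Abs_fps (\<lambda>n. real (\<Sum>t\<in>szs n. nidx t))"
definition Gf :: "real fps" where "Gf = Abs_fps (\<lambda>n. if n = 0 then 0 else 1)"

lemma dsum:
  fixes f g :: "'a \<Rightarrow> real"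
  assumes "finite A" "finite B"
  shows "(\<Sum>a\<in>A. \<Sum>b\<in>B. f a + g b) = (\<Sum>a\<in>A. f a) * real (card B) + real (card A) * (\<Sum>b\<in>B. g b)"
  by (simp add: sum.distrib sum_distrib_left sum_distrib_right mult.commute)

lemma card_sum: "real (card A) = (\<Sum>t\<in>A. (1::real))" by simp

lemma Tf_eq: "Tf = Gf + fps_X * Tf + fps_X * Tf^2"
proof (rule fps_ext)
  fix n show "Tf $ n = (Gf + fps_X * Tf + fps_X * Tf^2) $ n"
  proof (cases n)
    case 0 then show ?thesis by (simp add: Tf_def Gf_def szs0)
  next
    case (Suc k)
    have "Tf $ n = (\<Sum>t\<in>szs (Suc k). (1::real))" by (simp add: Tf_def Suc)
    also have "\<dots> = 1 + Tf $ k + (\<Sum>i\<le>k. Tf $ i * Tf $ (k - i))"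
      by (subst sum_szs_Suc) (simp add: Tf_def)
    moreover have "(Tf^2) $ k = (\<Sum>i\<le>k. Tf $ i * Tf $ (k - i))"
      by (simp add: power2_eq_square fps_mult_nth atLeast0AtMost)
    ultimately show ?thesis by (simp add: Suc Gf_def)
  qed
qed

lemma Of_eq: "Of m = fps_X^(Suc m) + fps_X * Of m + fps_X * (Of m * Tf + Tf * Of m)"
proof (rule fps_ext)
  fix n show "Of m $ n = (fps_X^(Suc m) + fps_X * Of m + fps_X * (Of m * Tf + Tf * Of m)) $ n"
  proof (cases n)
    case 0 then show ?thesis by (simp add: Of_def szs0)
  next
    case (Suc k)
    have "Of m $ n = (\<Sum>t\<in>szs (Suc k). real (occ m t))" by (simp add: Of_def Suc)
    also have "\<dots> = (if k = m then 1 else 0) + Of m $ k + (\<Sum>i\<le>k. Of m $ i * Tf $ (k - i) + Tf $ i * Of m $ (k - i))"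
      by (simp add: sum_szs_Suc Of_def Tf_def dsum finite_szs)
    moreover have "(Of m * Tf + Tf * Of m) $ k = (\<Sum>i\<le>k. Of m $ i * Tf $ (k - i) + Tf $ i * Of m $ (k - i))"
      by (simp only: fps_add_nth fps_mult_nth atLeast0AtMost sum.distrib)
    ultimately show ?thesis by (simp add: Suc fps_X_power_nth)
  qed
qed

lemma Nf_eq: "Nf = Gf + fps_X * Nf + fps_X * (Nf * Tf + Tf * Nf)"
proof (rule fps_ext)
  fix n show "Nf $ n = (Gf + fps_X * Nf + fps_X * (Nf * Tf + Tf * Nf)) $ n"
  proof (cases n)
    case 0 then show ?thesis by (simp add: Nf_def Gf_def szs0)
  next
    case (Suc k)
    have "Nf $ n = (\<Sum>t\<in>szs (Suc k). real (nidx t))" by (simp add: Nf_def Suc)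
    also have "\<dots> = 1 + Nf $ k + (\<Sum>i\<le>k. Nf $ i * Tf $ (k - i) + Tf $ i * Nf $ (k - i))"
      by (simp add: sum_szs_Suc Nf_def Tf_def dsum finite_szs)
    moreover have "(Nf * Tf + Tf * Nf) $ k = (\<Sum>i\<le>k. Nf $ i * Tf $ (k - i) + Tf $ i * Nf $ (k - i))"
      by (simp only: fps_add_nth fps_mult_nth atLeast0AtMost sum.distrib)
    ultimately show ?thesis by (simp add: Suc Gf_def)
  qed
qed

definition Wf :: "real fps" where "Wf = 1 - fps_X - 2 * fps_X * Tf"
definition Cf :: "real fps" where "Cf = inverse Wf"

lemma Wf0: "Wf $ 0 = 1" by (simp add: Wf_def)

lemma CW: "Cf * Wf = 1" unfolding Cf_def by (rule inverse_mult_eq_1) (simp add: Wf0)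

lemma Of_C: "Of m = fps_X^(Suc m) * Cf"
proof -
  have "Of m * Wf = fps_X^(Suc m)"
    using Of_eq[of m] unfolding Wf_def by (simp add: algebra_simps)
  have "Of m = Of m * (Cf * Wf)" using CW by simp
  also have "\<dots> = (Of m * Wf) * Cf" by (simp add: ac_simps)
  finally show ?thesis using \<open>Of m * Wf = fps_X^(Suc m)\<close> by simp
qed

lemma Nf_C: "Nf = Gf * Cf"
proof -
  have "Nf * Wf = Gf"
    using Nf_eq unfolding Wf_def by (simp add: algebra_simps)
  have "Nf = Nf * (Cf * Wf)" using CW by simp
  also have "\<dots> = (Nf * Wf) * Cf" by (simp add: ac_simps)
  finally show ?thesis using \<open>Nf * Wf = Gf\<close> by simp
qed

lemma Gf_X: "(1 - fps_X) * Gf = fps_X"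
  by (rule fps_ext) (auto simp: Gf_def algebra_simps fps_X_nth)

lemma C_sq: "Cf^2 * ((1 - fps_X)^3 - 4 * fps_X^2) = 1 - fps_X"
proof -
  have G: "Tf - fps_X * Tf - fps_X * Tf^2 = Gf" using Tf_eq by (simp add: algebra_simps)
  have "(1 - fps_X) * Wf^2 = (1 - fps_X)^3 - 4 * fps_X * ((1 - fps_X) * (Tf - fps_X * Tf - fps_X * Tf^2))"
    unfolding Wf_def by algebra
  also have "\<dots> = (1 - fps_X)^3 - 4 * fps_X^2"
    unfolding G Gf_X by (simp add: power2_eq_square)
  finally have e: "(1 - fps_X) * Wf^2 = (1 - fps_X)^3 - 4 * fps_X^2" .
  have "Cf^2 * ((1 - fps_X) * Wf^2) = (1 - fps_X) * (Cf * Wf)^2" by algebra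
  then show ?thesis using e CW by simp
qed



lemma rho_ex: "\<exists>x. 29/100 \<le> x \<and> x \<le> 3/10 \<and> x^3 + x^2 + 3*x - 1 = (0::real)"
  by (rule IVT') (auto intro!: continuous_intros simp: power3_eq_cube power2_eq_square)

lemma poly_mono: "0 < x \<Longrightarrow> x < y \<Longrightarrow> x^3 + x^2 + 3*x - 1 < y^3 + y^2 + 3*y - (1::real)"
proof -
  assume "0 < x" "x < y"
  then have "x^3 < y^3" "x^2 < y^2" by (auto intro: power_strict_mono)
  then show ?thesis using \<open>x < y\<close> by linarith
qed

lemma rho_props: "29/100 \<le> rho \<and> rho \<le> 3/10 \<and> rho^3 + rho^2 + 3*rho - 1 = 0"
proof -
  obtain x where x: "29/100 \<le> x" "x \<le> 3/10" "x^3 + x^2 + 3*x - 1 = (0::real)" using rho_ex by blast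
  have "\<exists>!z. z > 0 \<and> z ^ 3 + z ^ 2 + 3 * z - 1 = (0::real)"
  proof (rule ex1I[of _ x])
    show "x > 0 \<and> x ^ 3 + x ^ 2 + 3 * x - 1 = 0" using x by simp
    fix y assume y: "y > 0 \<and> y ^ 3 + y ^ 2 + 3 * y - 1 = (0::real)"
    show "y = x"
    proof (rule ccontr)
      assume "y \<noteq> x"
      then have "y < x \<or> x < y" by linarith
      then show False using poly_mono[of y x] poly_mono[of x y] x y by auto
    qed
  qed
  then have "rho = x" unfolding rho_def
    by (rule the1_equality) (use x in simp)
  then show ?thesis using x by simp
qed

lemma rho_lo: "29/100 \<le> rho" and rho_hi: "rho \<le> 3/10" and rho_eq: "rho^3 + rho^2 + 3*rho - 1 = 0"
  using rho_props by auto

lemma rho_pos: "0 < rho" using rho_lo by simp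

subsection \<open>scaling\<close>

definition sc :: "real \<Rightarrow> real fps \<Rightarrow> real fps" where "sc r F = Abs_fps (\<lambda>n. r^n * F $ n)"

lemma sc_nth[simp]: "sc r F $ n = r^n * F $ n" by (simp add: sc_def)

lemma sc_mult: "sc r (F * G) = sc r F * sc r G"
proof (rule fps_ext)
  fix n
  have "sc r (F * G) $ n = (\<Sum>i=0..n. r^i * F $ i * (r^(n-i) * G $ (n - i)))"
    by (simp add: fps_mult_nth sum_distrib_left)
       (rule sum.cong[OF refl], simp add: power_add[symmetric] algebra_simps)
  then show "sc r (F * G) $ n = (sc r F * sc r G) $ n" by (simp add: fps_mult_nth)
qed

lemma sc_add: "sc r (F + G) = sc r F + sc r G" by (rule fps_ext) (simp add: algebra_simps)
lemma sc_diff: "sc r (F - G) = sc r F - sc r G" by (rule fps_ext) (simp add: algebra_simps)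
lemma sc_one: "sc r 1 = 1" by (rule fps_ext) simp
lemma sc_X: "sc r fps_X = fps_const r * fps_X" by (rule fps_ext) (simp add: fps_X_nth le_Suc_eq)
lemma sc_numeral: "sc r (numeral k) = numeral k" by (rule fps_ext) (simp add: fps_numeral_nth)
lemma sc_power: "sc r (F ^ k) = sc r F ^ k"
  by (induction k) (simp_all add: sc_one sc_mult)

lemma two_fps: "(2::real fps) = fps_const 2" by (rule fps_ext) (simp add: fps_numeral_nth)

fun aa :: "nat \<Rightarrow> real" where
  "aa 0 = 1"
| "aa (Suc k) = aa k * (2 * real k + 1) / (2 * real k + 2)"

lemma aa_pos: "aa k > 0" by (induction k) auto

definition alpha :: "real fps" where "alpha = Abs_fps aa"

lemma alpha_ode: "(1 - fps_X) * fps_deriv alpha = fps_const (1/2) * alpha"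
proof (rule fps_ext)
  fix n
  show "((1 - fps_X) * fps_deriv alpha) $ n = (fps_const (1/2) * alpha) $ n"
  proof (cases n)
    case 0 then show ?thesis by (simp add: alpha_def algebra_simps)
  next
    case (Suc j)
    have "aa (Suc (Suc j)) = aa (Suc j) * (2 * real (Suc j) + 1) / (2 * real (Suc j) + 2)"
      by (rule aa.simps(2))
    then show ?thesis using Suc by (simp add: alpha_def algebra_simps field_simps del: aa.simps)
  qed
qed

lemma alpha_sq: "alpha^2 * (1 - fps_X) = 1"
proof -
  define U where "U = alpha^2 * (1 - fps_X)"
  have d: "fps_deriv U = 2 * alpha * fps_deriv alpha * (1 - fps_X) - alpha^2"
    unfolding U_def by (simp add: power2_eq_square algebra_simps)
  have "(1 - fps_X) * fps_deriv U = 2 * alpha * (1 - fps_X) * ((1 - fps_X) * fps_deriv alpha) - (1 - fps_X) * alpha^2"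
    unfolding d by algebra
  also have "\<dots> = (2 * fps_const (1/2)) * alpha * (1 - fps_X) * alpha - (1 - fps_X) * alpha^2"
    unfolding alpha_ode by algebra
  also have "2 * fps_const (1/2) = (1::real fps)" by (simp add: two_fps)
  finally have "(1 - fps_X) * fps_deriv U = 0" by (simp add: power2_eq_square algebra_simps)
  moreover have "(1 - fps_X :: real fps) \<noteq> 0"
  proof
    assume "(1 - fps_X :: real fps) = 0"
    then have "(1 - fps_X :: real fps) $ 0 = 0" by simp
    then show False by simp
  qed
  ultimately have "fps_deriv U = 0" by simp
  then have "U = fps_const (U $ 0)" by simp
  moreover have "U $ 0 = 1" by (simp add: U_def alpha_def power2_eq_square)
  ultimately show ?thesis by (simp add: U_def)
qed



definition "p1 = rho^2 + rho^3"
definition "p2 = rho^3"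
definition "d1 = rho^2 + rho^3 - rho"
definition "d2 = -(rho^4)"
definition "d3 = -(rho^4)"
definition "e0 = - (rho + rho^2 + rho^3) / 2"
definition "e1 = -(rho^3)"
definition "e2 = rho^4 / 2"

fun bb :: "nat \<Rightarrow> real" where
  "bb 0 = 1"
| "bb (Suc 0) = e0"
| "bb (Suc (Suc 0)) = ((e0 - d1) * e0 + e1) / 2"
| "bb (Suc (Suc (Suc k))) = ((e0 - d1 * (real k + 2)) * bb (k + 2) + (e1 - d2 * (real k + 1)) * bb (k + 1)
      + (e2 - d3 * real k) * bb k) / (real k + 3)"

definition beta :: "real fps" where "beta = Abs_fps bb"
definition "Rf = fps_const rho"
definition "Mh = 1 + fps_const d1 * fps_X + fps_const d2 * fps_X^2 + fps_const d3 * fps_X^3"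
definition "Kh = fps_const e0 + fps_const e1 * fps_X + fps_const e2 * fps_X^2"
definition "Qh = 1 + fps_const p1 * fps_X + fps_const p2 * fps_X^2"

lemma cXk_nth: "(fps_const (c::real) * fps_X^k * F) $ n = (if n < k then 0 else c * F $ (n - k))"
  by (simp add: mult.assoc fps_X_power_mult_nth)

lemma cX_nth: "(fps_const (c::real) * fps_X * F) $ n = (if n = 0 then 0 else c * F $ (n - 1))"
  using cXk_nth[of c 1 F n] by simp

lemma beta_ode: "Mh * fps_deriv beta = Kh * beta"
proof (rule fps_ext)
  fix n
  have L: "(Mh * fps_deriv beta) $ n = fps_deriv beta $ n + (if n = 0 then 0 else d1 * fps_deriv beta $ (n - 1))
     + (if n < 2 then 0 else d2 * fps_deriv beta $ (n - 2)) + (if n < 3 then 0 else d3 * fps_deriv beta $ (n - 3))"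
    unfolding Mh_def by (simp only: distrib_right fps_add_nth cXk_nth cX_nth mult_1_left)
  have R: "(Kh * beta) $ n = e0 * beta $ n + (if n = 0 then 0 else e1 * beta $ (n - 1))
     + (if n < 2 then 0 else e2 * beta $ (n - 2))"
    unfolding Kh_def by (simp only: distrib_right fps_add_nth cXk_nth cX_nth fps_mult_left_const_nth)
  show "(Mh * fps_deriv beta) $ n = (Kh * beta) $ n"
  proof (cases n)
    case 0 then show ?thesis using L R by (simp add: beta_def)
  next
    case (Suc j) note j = this
    show ?thesis
    proof (cases j)
      case 0 then show ?thesis using L R j by (simp add: beta_def) (simp add: field_simps)
    next
      case (Suc i) note i = this
      show ?thesis
      proof (cases i)
        case 0 then show ?thesis using L R i j by (simp add: beta_def numeral_eq_Suc) (simp add: field_simps)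
      next
        case (Suc k)
        have nn: "n = Suc (Suc (Suc k))" using Suc i j by simp
        have e: "bb (Suc (Suc (Suc (Suc k)))) = ((e0 - d1 * (real (Suc k) + 2)) * bb (Suc k + 2) + (e1 - d2 * (real (Suc k) + 1)) * bb (Suc k + 1)
           + (e2 - d3 * real (Suc k)) * bb (Suc k)) / (real (Suc k) + 3)" by (rule bb.simps(4))
        have e': "(real k + 4) * bb (Suc (Suc (Suc (Suc k)))) = (e0 - d1 * (real k + 3)) * bb (Suc (Suc (Suc k))) + (e1 - d2 * (real k + 2)) * bb (Suc (Suc k))
           + (e2 - d3 * (real k + 1)) * bb (Suc k)"
          unfolding e by (simp add: field_simps del: bb.simps)
        have L': "(Mh * fps_deriv beta) $ n = (real k + 4) * bb (Suc (Suc (Suc (Suc k)))) + d1 * ((real k + 3) * bb (Suc (Suc (Suc k))))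
           + d2 * ((real k + 2) * bb (Suc (Suc k))) + d3 * ((real k + 1) * bb (Suc k))"
          unfolding L by (simp add: nn beta_def numeral_eq_Suc del: bb.simps) (simp add: algebra_simps)
        have R': "(Kh * beta) $ n = e0 * bb (Suc (Suc (Suc k))) + e1 * bb (Suc (Suc k)) + e2 * bb (Suc k)"
          unfolding R by (simp add: nn beta_def numeral_eq_Suc del: bb.simps)
        show ?thesis unfolding L' R' e' by (simp add: algebra_simps del: bb.simps)
      qed
    qed
  qed
qed

lemma fps_const_numeral': "fps_const (numeral k :: real) = numeral k"
  by (rule fps_ext) (simp add: fps_numeral_nth)

lemma Qh_deriv: "fps_deriv Qh = fps_const p1 + fps_const (2 * p2) * fps_X"
  by (rule fps_ext) (simp add: Qh_def fps_X_nth)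

lemma Mh_fact: "Mh = (1 - Rf * fps_X) * Qh"
proof -
  have h: "fps_const d1 = Rf^2 + Rf^3 - Rf" "fps_const d2 = -(Rf^4)" "fps_const d3 = -(Rf^4)"
     "fps_const p1 = Rf^2 + Rf^3" "fps_const p2 = Rf^3"
    by (simp_all add: Rf_def d1_def d2_def d3_def p1_def p2_def)
  show ?thesis unfolding Mh_def Qh_def h by algebra
qed

lemma Kh_fact: "fps_const 2 * Kh + (1 - Rf * fps_X) * fps_deriv Qh = - Rf * Qh"
proof -
  define D where "D = fps_const (1/2::real)"
  have h: "fps_const e0 = - (Rf + Rf^2 + Rf^3) * D" "fps_const e1 = -(Rf^3)" "fps_const e2 = Rf^4 * D"
     "fps_const p1 = Rf^2 + Rf^3" "fps_const p2 = Rf^3" "fps_const (2 * p2) = fps_const 2 * Rf^3"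
    by (simp_all add: Rf_def D_def e0_def e1_def e2_def p1_def p2_def)
  have D2: "fps_const 2 * D = 1" by (simp add: D_def)
  have T2: "fps_const 2 = (2::real fps)" by (simp add: two_fps)
  show ?thesis unfolding Kh_def Qh_deriv unfolding Qh_def h using D2 T2 by algebra
qed

lemma beta_sq: "beta^2 * Qh = 1 - Rf * fps_X"
proof -
  define U where "U = beta^2 * Qh"
  define V where "V = U - (1 - Rf * fps_X)"
  have dU: "fps_deriv (beta^2 * Qh) = 2 * beta * fps_deriv beta * Qh + beta^2 * fps_deriv Qh"
    by (simp add: power2_eq_square algebra_simps)
  have two: "(2::real fps) = fps_const 2" by (rule two_fps)
  have "(1 - Rf * fps_X) * (2 * beta * fps_deriv beta * Qh + beta^2 * fps_deriv Qh) = - Rf * (beta^2 * Qh)"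
    using beta_ode Mh_fact Kh_fact two by algebra
  then have "(1 - Rf * fps_X) * fps_deriv U = - Rf * U"
    unfolding U_def dU .
  moreover have "fps_deriv V = fps_deriv U + Rf" by (simp add: V_def Rf_def)
  ultimately have E: "(1 - Rf * fps_X) * fps_deriv V = - Rf * V"
    unfolding V_def by algebra
  have e1: "(1 - Rf * fps_X) * fps_deriv V = fps_deriv V - fps_const rho * (fps_X * fps_deriv V)"
    by (simp add: Rf_def algebra_simps)
  have e2: "- Rf * V = fps_const (- rho) * V" by (simp add: Rf_def)
  have F: "fps_deriv V - fps_const rho * (fps_X * fps_deriv V) = fps_const (- rho) * V"
    using E unfolding e1 e2 .
  have coef0: "V $ 1 = - rho * V $ 0"
    using arg_cong[OF F, of "\<lambda>f. f $ 0"] by simp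
  have coefS: "real (n + 2) * V $ Suc (Suc n) - rho * (real (n + 1) * V $ Suc n) = - rho * V $ Suc n" for n
    using arg_cong[OF F, of "\<lambda>f. f $ Suc n"] by (simp add: algebra_simps)
  have V0: "V $ 0 = 0" by (simp add: V_def U_def Qh_def beta_def power2_eq_square)
  have "V $ n = 0" for n
  proof (induction n)
    case 0 then show ?case by (rule V0)
  next
    case (Suc n)
    show ?case
    proof (cases n)
      case 0 then show ?thesis using coef0 V0 by simp
    next
      case (Suc j)
      have "(2 + real j) * V $ Suc (Suc j) = 0" using coefS[of j] Suc.IH Suc by (simp add: algebra_simps)
      then show ?thesis using Suc by simp
    qed
  qed
  then have "V = 0" by (simp add: fps_eq_iff)
  then show ?thesis unfolding V_def U_def by simp
qed



lemma Ph_fact: "(1 - Rf * fps_X)^3 - 4 * (Rf * fps_X)^2 = (1 - fps_X) * Qh"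
proof -
  have r: "Rf^3 + Rf^2 + fps_const 3 * Rf = 1"
    using rho_eq by (intro fps_ext) (auto simp: Rf_def)
  have t: "fps_const 3 = (3::real fps)" by (rule fps_const_numeral')
  have h: "fps_const p1 = Rf^2 + Rf^3" "fps_const p2 = Rf^3"
    by (simp_all add: Rf_def p1_def p2_def)
  show ?thesis unfolding Qh_def h using r t by algebra
qed

definition Ch :: "real fps" where "Ch = sc rho Cf"

lemma Ch_sq: "Ch^2 * ((1 - fps_X) * Qh) = 1 - Rf * fps_X"
proof -
  have "sc rho (Cf^2 * ((1 - fps_X)^3 - 4 * fps_X^2)) = sc rho (1 - fps_X)"
    using C_sq by simp
  then have "Ch^2 * ((1 - Rf * fps_X)^3 - 4 * (Rf * fps_X)^2) = 1 - Rf * fps_X"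
    by (simp add: Ch_def sc_mult sc_power sc_diff sc_one sc_X sc_numeral Rf_def power_mult_distrib)
  then show ?thesis unfolding Ph_fact .
qed

lemma Ch_eq: "Ch = alpha * beta"
proof -
  have nz: "(1 - fps_X) * Qh \<noteq> 0"
  proof
    assume "(1 - fps_X) * Qh = 0"
    then have "((1 - fps_X) * Qh) $ 0 = 0" by simp
    then show False by (simp add: Qh_def)
  qed
  have "(alpha * beta)^2 * ((1 - fps_X) * Qh) = (alpha^2 * (1 - fps_X)) * (beta^2 * Qh)"
    by (simp add: power_mult_distrib ac_simps)
  also have "\<dots> = 1 - Rf * fps_X" by (simp add: alpha_sq beta_sq)
  finally have "Ch^2 * ((1 - fps_X) * Qh) = (alpha * beta)^2 * ((1 - fps_X) * Qh)"
    using Ch_sq by simp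
  then have sq: "Ch^2 = (alpha * beta)^2" using nz by simp
  have "(Ch - alpha * beta) * (Ch + alpha * beta) = 0"
    using sq by (simp add: algebra_simps power2_eq_square)
  moreover have "Ch + alpha * beta \<noteq> 0"
  proof
    assume "Ch + alpha * beta = 0"
    then have "(Ch + alpha * beta) $ 0 = 0" by simp
    then show False by (simp add: Ch_def Cf_def Wf0 alpha_def beta_def)
  qed
  ultimately show ?thesis by simp
qed

lemma Ch_nth: "Ch $ n = (\<Sum>j\<le>n. bb j * aa (n - j))"
proof -
  have eq: "Ch = beta * alpha" by (simp add: Ch_eq mult.commute)
  show ?thesis unfolding eq fps_mult_nth by (simp add: alpha_def beta_def atLeast0AtMost)
qed

lemma Cf_nth: "Cf $ n = Ch $ n / rho^n"
  using rho_pos by (simp add: Ch_def)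

lemma Cf_nonneg: "Cf $ n \<ge> 0"
proof -
  have "Of 0 $ (Suc n) = Cf $ n" by (simp add: Of_C fps_X_power_mult_nth)
  moreover have "Of 0 $ (Suc n) \<ge> 0" unfolding Of_def fps_nth_Abs_fps by (rule of_nat_0_le_iff)
  ultimately show ?thesis by simp
qed

subsection \<open>bounds for bb\<close>

lemma rho_pows: "rho^2 \<le> 9/100" "rho^3 \<le> 27/1000" "rho^4 \<le> 81/10000"
   "841/10000 \<le> rho^2" "24389/1000000 \<le> rho^3" "0 \<le> rho^4"
proof -
  have a: "rho^2 \<le> (3/10)^2" "rho^3 \<le> (3/10)^3" "rho^4 \<le> (3/10)^4"
    using rho_hi rho_pos by (intro power_mono; simp)+
  have b: "(29/100)^2 \<le> rho^2" "(29/100)^3 \<le> rho^3"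
    using rho_lo by (intro power_mono; simp)+
  show "rho^2 \<le> 9/100" "rho^3 \<le> 27/1000" "rho^4 \<le> 81/10000"
    "841/10000 \<le> rho^2" "24389/1000000 \<le> rho^3"
    using a b by (simp_all add: power_numeral_reduce)
  show "0 \<le> rho^4" using rho_pos by simp
qed

lemma const_bounds: "\<bar>e0\<bar> \<le> 21/100" "\<bar>d1\<bar> \<le> 1/5" "\<bar>d2\<bar> \<le> 1/100" "\<bar>d3\<bar> \<le> 1/100"
  "\<bar>e1\<bar> \<le> 3/100" "\<bar>e2\<bar> \<le> 1/200"
proof -
  note h = rho_pows rho_lo rho_hi
  show "\<bar>e0\<bar> \<le> 21/100" unfolding e0_def abs_le_iff using h by (simp add: field_simps; linarith)
  show "\<bar>d1\<bar> \<le> 1/5" unfolding d1_def abs_le_iff using h by (intro conjI) linarith+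
  show "\<bar>d2\<bar> \<le> 1/100" unfolding d2_def abs_le_iff using h by (intro conjI) linarith+
  show "\<bar>d3\<bar> \<le> 1/100" unfolding d3_def abs_le_iff using h by (intro conjI) linarith+
  show "\<bar>e1\<bar> \<le> 3/100" unfolding e1_def abs_le_iff using h by (intro conjI) linarith+
  show "\<bar>e2\<bar> \<le> 1/200" unfolding e2_def abs_le_iff using h by (simp add: field_simps; linarith)
qed

lemma lin_bound: "x \<ge> 0 \<Longrightarrow> \<bar>e - d * x\<bar> \<le> E + D * x \<Longrightarrow> True" by simp

lemma abs_lin: fixes x :: real assumes "x \<ge> 0" "\<bar>e\<bar> \<le> E" "\<bar>d\<bar> \<le> D"
  shows "\<bar>e - d * x\<bar> \<le> E + D * x"
proof -
  have "\<bar>d * x\<bar> = \<bar>d\<bar> * x" using assms by (simp add: abs_mult)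
  also have "\<dots> \<le> D * x" using assms by (intro mult_right_mono) auto
  finally show ?thesis using abs_triangle_ineq4[of e "d * x"] assms by linarith
qed

lemma abs3: "\<bar>a + b + c\<bar> \<le> \<bar>a\<bar> + \<bar>b\<bar> + \<bar>c::real\<bar>"
  using abs_triangle_ineq[of "a + b" c] abs_triangle_ineq[of a b] by linarith

lemma bb_bound: "\<bar>bb n\<bar> \<le> (9/20)^n"
proof (induction n rule: less_induct)
  case (less n)
  show ?case
  proof (cases n)
    case 0 then show ?thesis by simp
  next
    case (Suc j) note j = this
    show ?thesis
    proof (cases j)
      case 0 then show ?thesis using j const_bounds by simp
    next
      case (Suc i) note i = this
      show ?thesis
      proof (cases i)
        case 0
        have "\<bar>(e0 - d1) * e0 + e1\<bar> \<le> (21/100 + 1/5) * (21/100) + 3/100"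
        proof -
          have "\<bar>e0 - d1\<bar> \<le> 21/100 + 1/5" using const_bounds by linarith
          then have "\<bar>(e0 - d1) * e0\<bar> \<le> (21/100 + 1/5) * (21/100)"
            unfolding abs_mult using const_bounds by (intro mult_mono) auto
          then show ?thesis using const_bounds abs_triangle_ineq[of "(e0 - d1) * e0" e1] by linarith
        qed
        then show ?thesis using 0 i j by (simp add: power2_eq_square)
      next
        case (Suc k)
        have n: "n = Suc (Suc (Suc k))" using Suc i j by simp
        define x where "x = real k"
        have x0: "x \<ge> 0" by (simp add: x_def)
        define \<theta> where "\<theta> = (9/20::real)"
        define t where "t = \<theta>^k"
        have t0: "t \<ge> 0" by (simp add: t_def \<theta>_def)
        have "\<bar>bb (k+2)\<bar> \<le> (9/20)^(k+2)" using less[of "k+2"] n by simp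
        moreover have "(9/20::real)^(k+2) = t * \<theta>^2" by (simp add: t_def \<theta>_def power_add power2_eq_square)
        ultimately have b2: "\<bar>bb (k+2)\<bar> \<le> t * \<theta>^2" by simp
        have "\<bar>bb (k+1)\<bar> \<le> (9/20)^(k+1)" using less[of "k+1"] n by simp
        moreover have "(9/20::real)^(k+1) = t * \<theta>" by (simp add: t_def \<theta>_def power_add)
        ultimately have b1: "\<bar>bb (k+1)\<bar> \<le> t * \<theta>" by simp
        have b0: "\<bar>bb k\<bar> \<le> t" using less[of "k"] n by (simp add: t_def \<theta>_def)
        have A: "\<bar>e0 - d1 * (x + 2)\<bar> \<le> 21/100 + 1/5 * (x + 2)"
          using const_bounds x0 by (intro abs_lin) auto
        have B: "\<bar>e1 - d2 * (x + 1)\<bar> \<le> 3/100 + 1/100 * (x + 1)"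
          using const_bounds x0 by (intro abs_lin) auto
        have C: "\<bar>e2 - d3 * x\<bar> \<le> 1/200 + 1/100 * x"
          using const_bounds x0 by (intro abs_lin) auto
        have "\<bar>(e0 - d1 * (x + 2)) * bb (k + 2) + (e1 - d2 * (x + 1)) * bb (k + 1) + (e2 - d3 * x) * bb k\<bar>
           \<le> \<bar>e0 - d1 * (x + 2)\<bar> * \<bar>bb (k + 2)\<bar> + \<bar>e1 - d2 * (x + 1)\<bar> * \<bar>bb (k + 1)\<bar> + \<bar>e2 - d3 * x\<bar> * \<bar>bb k\<bar>"
          unfolding abs_mult[symmetric] by (rule abs3)
        also have "\<dots> \<le> (21/100 + 1/5 * (x + 2)) * (t * \<theta>^2) + (3/100 + 1/100 * (x + 1)) * (t * \<theta>)
            + (1/200 + 1/100 * x) * t"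
          by (intro add_mono mult_mono A B C b2 b1 b0) (auto simp: x0)
        also have "\<dots> \<le> (x + 3) * (t * \<theta>^3)"
        proof -
          have "0 \<le> t * ((x + 3) * \<theta>^3 - ((21/100 + 1/5 * (x + 2)) * \<theta>^2 + (3/100 + 1/100 * (x + 1)) * \<theta>
            + (1/200 + 1/100 * x)))"
            using t0 x0 by (intro mult_nonneg_nonneg) (simp_all add: \<theta>_def power_numeral_reduce field_simps)
          then show ?thesis by (simp add: algebra_simps)
        qed
        finally have *: "\<bar>(e0 - d1 * (x + 2)) * bb (k + 2) + (e1 - d2 * (x + 1)) * bb (k + 1) + (e2 - d3 * x) * bb k\<bar>
            \<le> (x + 3) * (t * \<theta>^3)" .
        have "bb n = ((e0 - d1 * (x + 2)) * bb (k + 2) + (e1 - d2 * (x + 1)) * bb (k + 1) + (e2 - d3 * x) * bb k) / (x + 3)"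
          by (simp add: n x_def del: bb.simps) (simp add: numeral_eq_Suc)
        then have "\<bar>bb n\<bar> = \<bar>(e0 - d1 * (x + 2)) * bb (k + 2) + (e1 - d2 * (x + 1)) * bb (k + 1) + (e2 - d3 * x) * bb k\<bar> / (x + 3)"
          using x0 by simp
        also have "\<dots> \<le> t * \<theta>^3" using * x0 by (simp add: divide_le_eq mult.commute)
        also have "t * \<theta>^3 = (9/20)^n"
        proof -
          have "n = k + 3" using n by simp
          then have "(9/20::real)^n = (9/20)^k * (9/20)^3" by (simp only: power_add)
          then show ?thesis by (simp add: t_def \<theta>_def)
        qed
        finally show ?thesis .
      qed
    qed
  qed
qed

lemma aa_Suc_ge: "aa k \<le> 2 * aa (Suc k)"
proof -
  have "aa (Suc k) = aa k * ((2 * real k + 1) / (2 * real k + 2))" by simp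
  moreover have "(2 * real k + 1) / (2 * real k + 2) \<ge> 1/2" by (simp add: field_simps)
  moreover have "aa k * (1/2) \<le> aa k * ((2 * real k + 1) / (2 * real k + 2))"
    using aa_pos[of k] calculation(2) by (intro mult_left_mono) auto
  ultimately show ?thesis by linarith
qed

lemma aa_shift_le: "j \<le> n \<Longrightarrow> aa (n - j) \<le> 2^j * aa n"
proof (induction j)
  case 0 then show ?case by simp
next
  case (Suc j)
  have "aa (n - Suc j) \<le> 2 * aa (Suc (n - Suc j))" by (rule aa_Suc_ge)
  also have "Suc (n - Suc j) = n - j" using Suc.prems by simp
  also have "2 * aa (n - j) \<le> 2 * (2^j * aa n)" using Suc by simp
  finally show ?case by simp
qed

lemma aa_ratio: "(\<lambda>n. aa n / aa (Suc n)) \<longlonglongrightarrow> 1"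
proof -
  have e: "aa n / aa (Suc n) = 1 + 1 / (2 * real n + 1)" for n
  proof -
    define q where "q = (2 * real n + 1) / (2 * real n + 2)"
    have "aa (Suc n) = aa n * q" by (simp add: q_def)
    then have "aa n / aa (Suc n) = 1 / q" using aa_pos[of n] by simp
    also have "\<dots> = 1 + 1 / (2 * real n + 1)" by (simp add: q_def field_simps)
    finally show ?thesis .
  qed
  have "((\<lambda>n. inverse (real (Suc n))) \<circ> (\<lambda>n. 2 * n)) \<longlonglongrightarrow> 0"
    by (rule LIMSEQ_subseq_LIMSEQ[OF LIMSEQ_inverse_real_of_nat]) (auto simp: strict_mono_def)
  then have "(\<lambda>n. 1 / (2 * real n + 1)) \<longlonglongrightarrow> 0" by (simp add: o_def divide_inverse add.commute)
  then have "(\<lambda>n. 1 + 1 / (2 * real n + 1)) \<longlonglongrightarrow> 1 + 0" by (intro tendsto_add tendsto_const)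
  then show ?thesis unfolding e by simp
qed



lemma aa_fwd: "(\<lambda>n. aa n / aa (n + j)) \<longlonglongrightarrow> 1"
proof (induction j)
  case 0 then show ?case using aa_pos by (simp add: less_imp_neq[symmetric])
next
  case (Suc j)
  have r: "(\<lambda>n. aa (n + j) / aa (Suc (n + j))) \<longlonglongrightarrow> 1"
    using LIMSEQ_ignore_initial_segment[OF aa_ratio, of j] by simp
  have "(\<lambda>n. aa n / aa (n + j) * (aa (n + j) / aa (Suc (n + j)))) \<longlonglongrightarrow> 1 * 1"
    by (intro tendsto_mult Suc r)
  moreover have "aa n / aa (n + j) * (aa (n + j) / aa (Suc (n + j))) = aa n / aa (n + Suc j)" for n
    using aa_pos[of "n + j"] by simp
  ultimately show ?case by simp
qed

lemma aa_back: "(\<lambda>n. aa (n - j) / aa n) \<longlonglongrightarrow> 1"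
  by (rule LIMSEQ_offset[where k = j]) (simp add: aa_fwd)

definition Lb :: real where "Lb = suminf bb"

lemma bb_abs_summable: "summable (\<lambda>k. norm (bb k))"
  by (rule summable_comparison_test[OF _ summable_geometric[of "9/20::real"]]) (auto intro: bb_bound)

lemma g_lim: "(\<lambda>n. Ch $ n / aa n) \<longlonglongrightarrow> Lb"
proof -
  define A where "A k n = (if k \<le> n then bb k * (aa (n - k) / aa n) else 0)" for k n
  have lim: "(\<lambda>n. A k n) \<longlonglongrightarrow> bb k" for k
  proof -
    have "(\<lambda>n. bb k * (aa (n - k) / aa n)) \<longlonglongrightarrow> bb k * 1"
      by (intro tendsto_mult tendsto_const aa_back)
    moreover have "eventually (\<lambda>n. bb k * (aa (n - k) / aa n) = A k n) sequentially"
      using eventually_ge_at_top[of k] by eventually_elim (simp add: A_def)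
    ultimately show ?thesis by (simp add: Lim_transform_eventually)
  qed
  have bound: "norm (A k n) \<le> (9/10)^k" for k n
  proof (cases "k \<le> n")
    case True
    have "\<bar>aa (n - k) / aa n\<bar> \<le> 2^k"
      using aa_shift_le[OF True] aa_pos[of n] aa_pos[of "n - k"] by (simp add: divide_le_eq)
    then have "\<bar>bb k\<bar> * \<bar>aa (n - k) / aa n\<bar> \<le> (9/20)^k * 2^k"
      by (intro mult_mono bb_bound) auto
    also have "(9/20::real)^k * 2^k = (9/10)^k" by (simp add: power_mult_distrib[symmetric])
    finally show ?thesis using True by (simp add: A_def abs_mult)
  qed (simp add: A_def)
  have T: "((\<lambda>n. suminf (\<lambda>k. A k n)) \<longlongrightarrow> suminf bb) sequentially"
    using tannerys_theorem[of A bb sequentially "\<lambda>k. (9/10)^k", OF lim]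
    using bound by (auto intro!: always_eventually summable_geometric)
  have "suminf (\<lambda>k. A k n) = Ch $ n / aa n" for n
  proof -
    have "suminf (\<lambda>k. A k n) = (\<Sum>k\<le>n. A k n)" by (rule suminf_finite) (auto simp: A_def)
    also have "\<dots> = (\<Sum>k\<le>n. bb k * aa (n - k)) / aa n"
      by (simp add: A_def sum_divide_distrib)
    finally show ?thesis by (simp add: Ch_nth)
  qed
  then show ?thesis using T by (simp add: Lb_def)
qed

lemma Lb_nz: "Lb \<noteq> 0"
proof -
  define s where "s n = (\<Sum>i\<le>n. bb i * bb (n - i))" for n
  have sq: "Lb * Lb = suminf s"
    unfolding Lb_def s_def using bb_abs_summable bb_abs_summable by (rule Cauchy_product)
  have "summable s" unfolding s_def by (rule summable_Cauchy_product[OF bb_abs_summable bb_abs_summable])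
  then have ss: "s sums suminf s" by (rule summable_sums)
  have s_nth: "(beta^2) $ n = s n" for n by (simp add: fps_square_nth s_def beta_def)
  have e: "beta^2 * Qh = beta^2 + fps_const p1 * fps_X * beta^2 + fps_const p2 * fps_X^2 * beta^2"
    by (simp add: Qh_def algebra_simps)
  have coef: "(beta^2 * Qh) $ n = s n + p1 * (if n = 0 then 0 else s (n - 1)) + p2 * (if n < 2 then 0 else s (n - 2))" for n
    unfolding e by (simp only: fps_add_nth cXk_nth cX_nth s_nth) simp
  have sh1: "(\<lambda>n. if n = 0 then 0 else s (n - 1)) sums suminf s"
    using ss sums_Suc_iff[of "\<lambda>n. if n = 0 then 0 else s (n - 1)" "suminf s"] by simp
  have sh2: "(\<lambda>n. if n < 2 then 0 else s (n - 2)) sums suminf s"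
    using ss sums_iff_shift[of "\<lambda>n. if n < 2 then 0 else s (n - 2)" 2 "suminf s"] by simp
  have "(\<lambda>n. (beta^2 * Qh) $ n) sums (suminf s + p1 * suminf s + p2 * suminf s)"
    unfolding coef by (intro sums_add sums_mult ss sh1 sh2)
  moreover have "(\<lambda>n. (beta^2 * Qh) $ n) sums (1 - rho)"
  proof -
    have "(\<lambda>n. (beta^2 * Qh) $ n) sums (\<Sum>n\<in>{0,1}. (beta^2 * Qh) $ n)"
      by (rule sums_finite) (auto simp: beta_sq Rf_def fps_X_nth)
    then show ?thesis by (simp add: beta_sq Rf_def fps_X_nth)
  qed
  ultimately have "suminf s * (1 + p1 + p2) = 1 - rho"
    using sums_unique2 by (fastforce simp: algebra_simps)
  then have "suminf s \<noteq> 0" using rho_hi by auto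
  then show ?thesis using sq by auto
qed

lemma Lb_pos: "Lb > 0"
proof -
  have "0 \<le> Lb"
  proof (rule LIMSEQ_le_const[OF g_lim])
    show "\<exists>N. \<forall>n\<ge>N. 0 \<le> Ch $ n / aa n"
      using aa_pos Cf_nonneg rho_pos by (auto simp: Ch_def intro!: divide_nonneg_pos)
  qed
  then show ?thesis using Lb_nz by simp
qed

lemma Cf_ev_pos: "eventually (\<lambda>n. Cf $ n > 0) sequentially"
proof -
  have "eventually (\<lambda>n. 0 < Ch $ n / aa n) sequentially"
    using order_tendstoD(1)[OF g_lim Lb_pos] .
  then show ?thesis
  proof eventually_elim
    case (elim n)
    then have "Ch $ n > 0" using aa_pos[of n] by (simp add: zero_less_divide_iff)
    then show ?case using rho_pos by (simp add: Cf_nth)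
  qed
qed

lemma Cf_ratio: "(\<lambda>n. Cf $ n / Cf $ Suc n) \<longlonglongrightarrow> rho"
proof -
  define g where "g n = Ch $ n / aa n" for n
  have "(\<lambda>n. rho * g n * (aa n / aa (Suc n)) / g (Suc n)) \<longlonglongrightarrow> rho * Lb * 1 / Lb"
    unfolding g_def
    by (intro tendsto_divide tendsto_mult tendsto_const g_lim aa_ratio LIMSEQ_Suc[OF g_lim] Lb_nz)
  moreover have "rho * g n * (aa n / aa (Suc n)) / g (Suc n) = Cf $ n / Cf $ Suc n" for n
  proof (cases "Ch $ Suc n = 0")
    case True then show ?thesis by (simp add: g_def Cf_nth)
  next
    case False
    then show ?thesis using aa_pos[of n] aa_pos[of "Suc n"] rho_pos
      by (simp add: g_def Cf_nth field_simps del: aa.simps)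
  qed
  ultimately show ?thesis using Lb_nz by simp
qed



lemma contraction:
  fixes e \<delta> :: "nat \<Rightarrow> real"
  assumes step: "\<forall>n\<ge>N. \<bar>e (Suc n)\<bar> \<le> \<theta> * \<bar>e n\<bar> + \<delta> n"
    and d: "\<delta> \<longlonglongrightarrow> 0" and th: "0 \<le> \<theta>" "\<theta> < 1"
  shows "e \<longlonglongrightarrow> 0"
proof (rule LIMSEQ_I)
  fix r :: real assume r: "0 < r"
  have "0 < r * (1 - \<theta>) / 2" using r th by simp
  from LIMSEQ_D[OF d this] obtain N1 where N1: "\<forall>n\<ge>N1. norm (\<delta> n - 0) < r * (1 - \<theta>) / 2" by blast
  define M where "M = max N N1"
  have claim: "\<bar>e (M + k)\<bar> \<le> \<theta>^k * \<bar>e M\<bar> + r / 2" for k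
  proof (induction k)
    case 0 then show ?case using r by simp
  next
    case (Suc k)
    have a1: "\<bar>e (M + Suc k)\<bar> \<le> \<theta> * \<bar>e (M + k)\<bar> + \<delta> (M + k)"
      using step M_def by simp
    have a2: "\<theta> * \<bar>e (M + k)\<bar> \<le> \<theta> * (\<theta>^k * \<bar>e M\<bar> + r / 2)"
      using Suc th by (intro mult_left_mono) auto
    have a3: "\<delta> (M + k) < r * (1 - \<theta>) / 2"
    proof -
      have "norm (\<delta> (M + k) - 0) < r * (1 - \<theta>) / 2" using N1 M_def by simp
      then show ?thesis by (simp add: abs_less_iff)
    qed
    have H: "\<bar>e (M + Suc k)\<bar> < \<theta> * (\<theta>^k * \<bar>e M\<bar> + r / 2) + r * (1 - \<theta>) / 2"
      using a1 a2 a3 by linarith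
    have "\<theta> * (\<theta>^k * \<bar>e M\<bar> + r / 2) + r * (1 - \<theta>) / 2 = \<theta>^(Suc k) * \<bar>e M\<bar> + r / 2"
      by (simp add: field_simps)
    then show ?case using H by simp
  qed
  have "(\<lambda>k. \<theta>^k * \<bar>e M\<bar>) \<longlonglongrightarrow> 0 * \<bar>e M\<bar>"
    using th by (intro tendsto_mult LIMSEQ_power_zero tendsto_const) auto
  then have "(\<lambda>k. \<theta>^k * \<bar>e M\<bar>) \<longlonglongrightarrow> 0" by simp
  from LIMSEQ_D[OF this, of "r/2"] r obtain K where K: "\<forall>k\<ge>K. norm (\<theta>^k * \<bar>e M\<bar> - 0) < r / 2" by auto
  show "\<exists>no. \<forall>n\<ge>no. norm (e n - 0) < r"
  proof (intro exI allI impI)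
    fix n assume n: "M + K \<le> n"
    have k: "n - M \<ge> K" using n by simp
    have "\<bar>e (M + (n - M))\<bar> \<le> \<theta>^(n - M) * \<bar>e M\<bar> + r / 2" by (rule claim)
    moreover have "M + (n - M) = n" using n by simp
    moreover have "\<theta>^(n - M) * \<bar>e M\<bar> < r / 2" using K k by auto
    ultimately show "norm (e n - 0) < r" by simp
  qed
qed

lemma generic:
  fixes C :: "nat \<Rightarrow> real"
  assumes pos: "eventually (\<lambda>n. C n > 0) sequentially"
    and rat: "(\<lambda>n. C n / C (Suc n)) \<longlonglongrightarrow> \<rho>" and rp: "0 < \<rho>" "\<rho> < 1"
  shows "(\<lambda>n. C n / (\<Sum>k<n + Suc m. C k)) \<longlonglongrightarrow> (1 - \<rho>) * \<rho>^m"
proof -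
  obtain N where N: "\<And>n. n \<ge> N \<Longrightarrow> C n > 0" using pos by (auto simp: eventually_sequentially)
  have pw: "(\<lambda>n. C n / C (n + j)) \<longlonglongrightarrow> \<rho>^j" for j
  proof (induction j)
    case 0
    have "eventually (\<lambda>n. 1 = C n / C (n + 0)) sequentially"
      using pos by eventually_elim simp
    then show ?case by (simp add: Lim_transform_eventually[OF tendsto_const])
  next
    case (Suc j)
    have r: "(\<lambda>n. C (n + j) / C (Suc (n + j))) \<longlonglongrightarrow> \<rho>"
      using LIMSEQ_ignore_initial_segment[OF rat, of j] by simp
    have "(\<lambda>n. C n / C (n + j) * (C (n + j) / C (Suc (n + j)))) \<longlonglongrightarrow> \<rho>^j * \<rho>"
      by (intro tendsto_mult Suc r)
    moreover have "eventually (\<lambda>n. C n / C (n + j) * (C (n + j) / C (Suc (n + j))) = C n / C (n + Suc j)) sequentially"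
      using eventually_ge_at_top[of N]
    proof eventually_elim
      case (elim n)
      then have "C (n + j) > 0" using N by simp
      then show ?case by simp
    qed
    ultimately show ?case by (simp add: Lim_transform_eventually mult.commute)
  qed
  define l0 where "l0 = 1 / (1 - \<rho>)"
  have l1: "l0 * (1 - \<rho>) = 1" using rp by (simp add: l0_def)
  define x where "x n = (\<Sum>k<Suc n. C k) / C n" for n
  define r where "r n = C n / C (Suc n)" for n
  define e where "e n = x n - l0" for n
  define \<theta> where "\<theta> = (1 + \<rho>) / 2"
  have th: "0 \<le> \<theta>" "\<theta> < 1" "\<rho> < \<theta>" using rp by (auto simp: \<theta>_def)
  have ev1: "eventually (\<lambda>n. r n < \<theta>) sequentially"
    using order_tendstoD(2)[OF rat th(3)] by (simp add: r_def)
  have ev2: "eventually (\<lambda>n. n \<ge> N) sequentially" by (rule eventually_ge_at_top)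
  have "eventually (\<lambda>n. \<bar>e (Suc n)\<bar> \<le> \<theta> * \<bar>e n\<bar> + \<bar>r n - \<rho>\<bar> * l0) sequentially"
    using ev1 ev2
  proof eventually_elim
    case (elim n)
    have Cn: "C n > 0" "C (Suc n) > 0" using N elim by auto
    have r0: "0 < r n" using Cn by (simp add: r_def)
    have xs: "x (Suc n) = 1 + r n * x n"
      using Cn by (simp add: x_def r_def field_simps)
    have "e (Suc n) = r n * e n + (r n - \<rho>) * l0"
      using l1 unfolding e_def xs by (simp add: algebra_simps)
    then have "\<bar>e (Suc n)\<bar> \<le> \<bar>r n\<bar> * \<bar>e n\<bar> + \<bar>r n - \<rho>\<bar> * l0"
      using rp by (simp add: abs_mult l0_def abs_triangle_ineq[THEN order_trans])
    also have "\<bar>r n\<bar> * \<bar>e n\<bar> \<le> \<theta> * \<bar>e n\<bar>"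
      using r0 elim by (intro mult_right_mono) auto
    finally show ?case by simp
  qed
  then obtain N2 where N2: "\<forall>n\<ge>N2. \<bar>e (Suc n)\<bar> \<le> \<theta> * \<bar>e n\<bar> + \<bar>r n - \<rho>\<bar> * l0"
    by (auto simp: eventually_sequentially)
  have "(\<lambda>n. \<bar>r n - \<rho>\<bar> * l0) \<longlonglongrightarrow> \<bar>\<rho> - \<rho>\<bar> * l0"
    unfolding r_def by (intro tendsto_mult tendsto_rabs tendsto_diff rat tendsto_const)
  then have "(\<lambda>n. \<bar>r n - \<rho>\<bar> * l0) \<longlonglongrightarrow> 0" by simp
  from contraction[OF N2 this th(1,2)] have "e \<longlonglongrightarrow> 0" .
  then have "(\<lambda>n. e n + l0) \<longlonglongrightarrow> 0 + l0" by (intro tendsto_add tendsto_const)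
  then have xl: "x \<longlonglongrightarrow> l0" by (simp add: e_def)
  have "(\<lambda>n. (C n / C (n + m)) / x (n + m)) \<longlonglongrightarrow> \<rho>^m / l0"
    using rp by (intro tendsto_divide pw LIMSEQ_ignore_initial_segment[OF xl]) (auto simp: l0_def)
  moreover have "eventually (\<lambda>n. (C n / C (n + m)) / x (n + m) = C n / (\<Sum>k<n + Suc m. C k)) sequentially"
    using eventually_ge_at_top[of N]
  proof eventually_elim
    case (elim n)
    then have "C (n + m) > 0" using N by simp
    then show ?case by (simp add: x_def)
  qed
  ultimately have "(\<lambda>n. C n / (\<Sum>k<n + Suc m. C k)) \<longlonglongrightarrow> \<rho>^m / l0"
    by (rule Lim_transform_eventually)
  moreover have "\<rho>^m / l0 = (1 - \<rho>) * \<rho>^m" by (simp add: l0_def)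
  ultimately show ?thesis by simp
qed

lemma Nf_nth: "Nf $ n = (\<Sum>k<n. Cf $ k)"
proof -
  have e: "(1 - fps_X) * Nf = fps_X * Cf"
    unfolding Nf_C by (simp add: mult.assoc[symmetric] Gf_X)
  have s: "Nf $ Suc n - Nf $ n = Cf $ n" for n
    using arg_cong[OF e, of "\<lambda>f. f $ Suc n"] by (simp add: algebra_simps)
  have z: "Nf $ 0 = 0" by (simp add: Nf_def szs0)
  show ?thesis
  proof (induction n)
    case 0 then show ?case by (simp add: z)
  next
    case (Suc n) then show ?case using s[of n] by simp
  qed
qed

lemma probX_eq: "probX (n + Suc m) m = Cf $ n / (\<Sum>k<n + Suc m. Cf $ k)"
proof -
  have "probX (n + Suc m) m = Of m $ (n + Suc m) / Nf $ (n + Suc m)"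
    by (simp add: probX_def Of_def Nf_def szs_def)
  also have "Of m $ (n + Suc m) = Cf $ n" by (simp only: Of_C fps_X_power_mult_nth) simp
  finally show ?thesis by (simp add: Nf_nth)
qed

theorem mainTheorem5:
  fixes m :: nat
  shows "(\<lambda>n. probX n m) \<longlonglongrightarrow> (1 - rho) * rho ^ m"
proof (rule LIMSEQ_offset[where k = "Suc m"])
  have "(\<lambda>n. Cf $ n / (\<Sum>k<n + Suc m. Cf $ k)) \<longlonglongrightarrow> (1 - rho) * rho ^ m"
    by (rule generic[OF Cf_ev_pos Cf_ratio rho_pos]) (use rho_hi in simp)
  then show "(\<lambda>n. probX (n + Suc m) m) \<longlonglongrightarrow> (1 - rho) * rho ^ m"
    unfolding probX_eq .
qed


end
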